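(* Let $\alpha$ be a constant and let $(e_n)_{n\in\mathbb Z}$ be a sequence of nonzero numbers satisfying $$e_{n-1}e_{n-2}^2e_{n-5}+e_{n-1}^2e_{n-4}^2+e_ne_{n-3}^2e_{n-4}=\alpha\,e_{n-2}^2e_{n-3}^2$$ for all $n$. Put $u_n=\frac{e_ne_{n+3}}{e_{n+1}e_{n+2}}$ and $J=(u_1u_0-\alpha)(u_1+u_0)$. Then for all $n$, $$e_{n+5}e_n+\alpha\,e_{n+4}e_{n+1}+J\,e_{n+3}e_{n+2}=0.$$
   Context: The sequence $u_n$ satisfies $u_{n+1}+u_{n-1}=(\alpha-u_n^2)/u_n$, for which $(u_nu_{n-1}-\alpha)(u_n+u_{n-1})$ is a first integral, so $J$ equals this quantity for every $n$. *)

theory Defs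
  imports Complex_Main
begin

definition u_seq :: "(int \<Rightarrow> complex) \<Rightarrow> int \<Rightarrow> complex" where
  "u_seq e n = (e n * e (n+3)) / (e (n+1) * e (n+2))"

end

theory Submission
  imports Defs
begin

lemma u_rel:
  fixes e :: "int \<Rightarrow> complex" and \<alpha> :: complex
  assumes nz: "\<And>n. e n \<noteq> 0"
    and rec: "\<And>n. e (n-1) * e (n-2)^2 * e (n-5) + e (n-1)^2 * e (n-4)^2
                 + e n * e (n-3)^2 * e (n-4) = \<alpha> * e (n-2)^2 * e (n-3)^2"
  shows "u_seq e m * (u_seq e (m-1) + u_seq e m + u_seq e (m+1)) = \<alpha>"
proof -
  have r: "e (m+3) * e (m+2)^2 * e (m-1) + e (m+3)^2 * e m^2 + e (m+4) * e (m+1)^2 * e m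
        = \<alpha> * e (m+2)^2 * e (m+1)^2"
    using rec[of "m+4"] by (simp add: algebra_simps)
  have a: "u_seq e (m-1) = e (m-1) * e (m+2) / (e m * e (m+1))"
    unfolding u_seq_def by (simp add: algebra_simps)
  have b: "u_seq e m = e m * e (m+3) / (e (m+1) * e (m+2))"
    unfolding u_seq_def by (simp add: algebra_simps)
  have c: "u_seq e (m+1) = e (m+1) * e (m+4) / (e (m+2) * e (m+3))"
    unfolding u_seq_def by (simp add: algebra_simps)
  have n1: "e (m-1) \<noteq> 0" "e m \<noteq> 0" "e (m+1) \<noteq> 0" "e (m+2) \<noteq> 0" "e (m+3) \<noteq> 0" "e (m+4) \<noteq> 0"
    using nz by auto
  show ?thesis unfolding a b c using n1 r
    by (simp add: field_simps power2_eq_square)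
qed

definition JJ :: "(int \<Rightarrow> complex) \<Rightarrow> complex \<Rightarrow> int \<Rightarrow> complex" where
  "JJ e \<alpha> m = (u_seq e m * u_seq e (m-1) - \<alpha>) * (u_seq e m + u_seq e (m-1))"

theorem proposition5:
  fixes e :: "int \<Rightarrow> complex" and \<alpha> :: complex
  assumes nz: "\<And>n. e n \<noteq> 0"
    and rec: "\<And>n. e (n-1) * e (n-2)^2 * e (n-5) + e (n-1)^2 * e (n-4)^2
                 + e n * e (n-3)^2 * e (n-4) = \<alpha> * e (n-2)^2 * e (n-3)^2"
  shows "\<forall>n. e (n+5) * e n + \<alpha> * e (n+4) * e (n+1)
          + ((u_seq e 1 * u_seq e 0 - \<alpha>) * (u_seq e 1 + u_seq e 0)) * e (n+3) * e (n+2) = 0"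
proof
  fix n :: int
  let ?u = "u_seq e"
  have ur: "\<And>m. ?u m * (?u (m-1) + ?u m + ?u (m+1)) = \<alpha>" using u_rel[OF nz rec] by blast
  have ua: "\<alpha> = ?u m * (?u (m-1) + ?u m + ?u (m+1))" for m using ur[of m] by simp
  have Js: "JJ e \<alpha> (m+1) = JJ e \<alpha> m" for m
  proof -
    have "JJ e \<alpha> (m+1) = -?u m * (?u (m-1) + ?u m) * (?u (m+1) + ?u m)"
      unfolding JJ_def ua[of m] by (simp add: algebra_simps)
    also have "\<dots> = JJ e \<alpha> m"
      unfolding JJ_def ua[of m] by (simp add: algebra_simps)
    finally show ?thesis .
  qed
  have Jp: "JJ e \<alpha> (1 + int k) = JJ e \<alpha> 1" for k
  proof (induction k)
    case (Suc k)
    have "JJ e \<alpha> (1 + int (Suc k)) = JJ e \<alpha> (1 + int k)"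
      using Js[of "1 + int k"] by (simp add: add.assoc)
    then show ?case using Suc by simp
  qed simp
  have Jm: "JJ e \<alpha> (1 - int k) = JJ e \<alpha> 1" for k
  proof (induction k)
    case (Suc k)
    have "JJ e \<alpha> (1 - int k) = JJ e \<alpha> (1 - int (Suc k))"
      using Js[of "1 - int (Suc k)"] by simp
    then show ?case using Suc by simp
  qed simp
  have J: "JJ e \<alpha> m = JJ e \<alpha> 1" for m
  proof (cases "m \<ge> 1")
    case True
    then have "m = 1 + int (nat (m - 1))" by simp
    then obtain k where "m = 1 + int k" by blast
    then show ?thesis using Jp by simp
  next
    case False
    then have "m = 1 - int (nat (1 - m))" by simp
    then obtain k where "m = 1 - int k" by blast
    then show ?thesis using Jm by simp
  qed
  have J2: "(?u 1 * ?u 0 - \<alpha>) * (?u 1 + ?u 0) = -?u (n+1) * (?u n + ?u (n+1)) * (?u (n+2) + ?u (n+1))"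
  proof -
    have "(?u 1 * ?u 0 - \<alpha>) * (?u 1 + ?u 0) = JJ e \<alpha> (n+2)" using J[of "n+2"] by (simp add: JJ_def)
    also have "\<dots> = -?u (n+1) * (?u n + ?u (n+1)) * (?u (n+2) + ?u (n+1))"
      unfolding JJ_def ua[of "n+1"] by (simp add: algebra_simps)
    finally show ?thesis .
  qed
  have rel: "?u n * ?u (n+1) * ?u (n+2) + \<alpha> * ?u (n+1) - ?u (n+1) * (?u n + ?u (n+1)) * (?u (n+2) + ?u (n+1)) = 0"
    unfolding ua[of "n+1"] by (simp add: algebra_simps)
  have a: "?u n = e n * e (n+3) / (e (n+1) * e (n+2))" unfolding u_seq_def by simp
  have b: "?u (n+1) = e (n+1) * e (n+4) / (e (n+2) * e (n+3))"
    unfolding u_seq_def by (simp add: algebra_simps)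
  have c: "?u (n+2) = e (n+2) * e (n+5) / (e (n+3) * e (n+4))"
    unfolding u_seq_def by (simp add: algebra_simps)
  have n1: "e n \<noteq> 0" "e (n+1) \<noteq> 0" "e (n+2) \<noteq> 0" "e (n+3) \<noteq> 0" "e (n+4) \<noteq> 0" "e (n+5) \<noteq> 0"
    using nz by auto
  have key: "e (n+5) * e n + \<alpha> * e (n+4) * e (n+1) = (e (n+3) * e (n+2)) * (?u n * ?u (n+1) * ?u (n+2) + \<alpha> * ?u (n+1))"
    unfolding a b c using n1 by (simp add: field_simps)
  show "e (n+5) * e n + \<alpha> * e (n+4) * e (n+1)
          + ((?u 1 * ?u 0 - \<alpha>) * (?u 1 + ?u 0)) * e (n+3) * e (n+2) = 0"
    unfolding key J2 using rel by (simp add: algebra_simps)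
qed

end
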